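(* Let $p$ and $q$ be positive integers with $q\ge 2$ and $\gcd(p,q)=1$, and let $\xi_j=e^{2\pi i j/q}$. Then $$\sum_{j=1}^{q-1}\frac{\xi_j}{(\xi_j-1)^2(\xi_j^p-1)}=\frac{q^2-1}{24}.$$ *)

theory Defs
  imports Complex_Main
begin

end

theory Submission
  imports Defs "HOL-Analysis.Analysis"
begin

lemma geo_id: "((z::complex) - 1) * (\<Sum>k<n. z^k) = z^n - 1"
  by (induction n) (auto simp: algebra_simps)

lemma A_id: "((z::complex) - 1) * (\<Sum>k<n. of_nat k * z^k) = (of_nat n - 1) * z^n + 1 - (\<Sum>k<n. z^k)"
  by (induction n) (auto simp: algebra_simps)

lemma B_id: "((z::complex) - 1) * (\<Sum>k<n. (of_nat k)^2 * z^k) =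
   (of_nat n - 1)^2 * z^n + (\<Sum>k<n. z^k) - 2 * (\<Sum>k<n. of_nat k * z^k) - 1"
  by (induction n) (auto simp: algebra_simps power2_eq_square)

lemma C_id:
  assumes "(z::complex)^q = 1" "z \<noteq> 1"
  shows "(\<Sum>k<q. of_nat k * (of_nat q - of_nat k) * z^k) = 2 * of_nat q * z / (z - 1)^2"
proof -
  have nz: "z - 1 \<noteq> 0" using assms by simp
  have G: "(\<Sum>k<q. z^k) = 0" using geo_id[of z q] assms by simp
  define A where "A = (\<Sum>k<q. of_nat k * z^k)"
  define B where "B = (\<Sum>k<q. (of_nat k)^2 * z^k)"
  have hA: "(z - 1) * A = of_nat q" using A_id[of z q] assms G by (simp add: A_def algebra_simps)
  have hB: "(z - 1) * B = (of_nat q - 1)^2 - 2 * A - 1" using B_id[of z q] assms G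
    by (simp add: A_def B_def)
  have e: "(\<Sum>k<q. of_nat k * (of_nat q - of_nat k) * z^k) = of_nat q * A - B"
    by (simp add: A_def B_def sum_distrib_left sum_subtractf[symmetric] algebra_simps power2_eq_square)
  have "(z - 1)^2 * (of_nat q * A - B) = (z-1) * (of_nat q * ((z-1)*A) - (z-1)*B)"
    by (simp add: algebra_simps power2_eq_square)
  also have "\<dots> = (z-1) * (2 * of_nat q + 2 * A)"
    unfolding hA hB by (simp add: algebra_simps power2_eq_square)
  also have "\<dots> = 2 * of_nat q * (z - 1) + 2 * ((z - 1) * A)"
    by (simp add: algebra_simps)
  also have "\<dots> = 2 * of_nat q * z"
    unfolding hA by (simp add: algebra_simps)
  finally have "(z - 1)^2 * (of_nat q * A - B) = 2 * of_nat q * z" .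
  then have "of_nat q * A - B = 2 * of_nat q * z / (z - 1)^2" using nz
    by (simp add: eq_divide_eq mult.commute)
  then show ?thesis using e by simp
qed

lemma sumk: "(\<Sum>k<n. of_nat k * (of_nat m - of_nat k) :: complex) =
   of_nat m * of_nat n * (of_nat n - 1) / 2 - of_nat n * (of_nat n - 1) * (2 * of_nat n - 1) / 6"
  by (induction n) (auto simp: field_simps)

lemma pair_id:
  assumes "(z::complex) \<noteq> 0" "z \<noteq> 1" "z^p \<noteq> 1"
  shows "z / ((z - 1)^2 * (z^p - 1)) + inverse z / ((inverse z - 1)^2 * (inverse z ^ p - 1))
         = - (z / (z - 1)^2)"
proof -
  define y where "y = z^p"
  have y0: "y \<noteq> 0" using assms by (simp add: y_def)
  have y1: "y - 1 \<noteq> 0" using assms by (simp add: y_def)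
  have z1: "z - 1 \<noteq> 0" using assms by simp
  have iy: "inverse z ^ p = inverse y" by (simp add: y_def power_inverse)
  have a: "inverse z - 1 = (1 - z) / z" using assms by (simp add: field_simps)
  have b: "inverse y - 1 = (1 - y) / y" using y0 by (simp add: field_simps)
  have c00: "inverse z / (((1 - z) / z)^2 * ((1 - y) / y)) = z * y / ((1 - z)^2 * (1 - y))"
  proof -
    have "1 - y \<noteq> 0" using y1 by simp
    then show ?thesis using assms(1) y0 z1 by (simp add: field_simps power2_eq_square)
  qed
  have c0: "inverse z / (((1 - z) / z)^2 * ((1 - y) / y)) = z * y / ((z - 1)^2 * (1 - y))"
    unfolding c00 by (simp only: power2_commute)
  have m: "(z - 1)^2 * (1 - y) = - ((z - 1)^2 * (y - 1))" by (simp add: algebra_simps)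
  have c: "inverse z / (((1 - z) / z)^2 * ((1 - y) / y)) = - (z * y / ((z - 1)^2 * (y - 1)))"
    unfolding c0 m by (simp only: divide_minus_right)
  have "z / ((z - 1)^2 * (y - 1)) - (z * y / ((z - 1)^2 * (y - 1))) = (z - z * y) / ((z - 1)^2 * (y - 1))"
    by (simp add: diff_divide_distrib)
  also have "z - z * y = (- z) * (y - 1)" by (simp add: algebra_simps)
  also have "(- z) * (y - 1) / ((z - 1)^2 * (y - 1)) = (- z) / (z - 1)^2"
    using y1 by (rule mult_divide_mult_cancel_right)
  finally have "z / ((z - 1)^2 * (y - 1)) - (z * y / ((z - 1)^2 * (y - 1))) = - (z / (z - 1)^2)"
    by simp
  then show ?thesis unfolding iy a b c y_def[symmetric] by simp
qed

theorem mainTheorem8: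
  fixes p q :: nat
  assumes "p > 0" and "q \<ge> 2" and "coprime p q"
  shows "(\<Sum>j=1..q-1. let \<xi> = exp (2 * pi * \<i> * of_nat j / of_nat q) in
            \<xi> / ((\<xi> - 1)^2 * (\<xi>^p - 1))) = (of_nat q ^ 2 - 1) / 24"
proof -
  define w where "w j = exp (2 * of_real pi * \<i> * of_nat j / of_nat q)" for j :: nat
  define T where "T z = z / ((z - 1)^2 * (z^p - 1))" for z :: complex
  define D where "D z = z / (z - 1)^2" for z :: complex
  have q1: "1 \<le> q" using assms by simp
  have qnz: "(of_nat q :: complex) \<noteq> 0" using assms by simp
  have wpow: "w j ^ n = w (j * n)" for j n
  proof -
    have "w (j * n) = exp (of_nat n * (2 * of_real pi * \<i> * of_nat j / of_nat q))"
      unfolding w_def by (simp add: algebra_simps)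
    then show ?thesis by (simp only: exp_of_nat_mult w_def)
  qed
  have wq: "w j ^ q = 1" for j unfolding w_def using complex_root_unity assms by simp
  have w1: "w j = 1 \<longleftrightarrow> q dvd j" for j unfolding w_def using complex_root_unity_eq_1[OF q1] by simp
  have w0: "w j \<noteq> 0" for j unfolding w_def by simp
  have wadd: "w (a + b) = w a * w b" for a b
    unfolding w_def by (simp add: add_divide_distrib distrib_left distrib_right exp_add)
  have winv: "w (q - j) = inverse (w j)" if "j \<le> q" for j
  proof -
    have "w (q - j) * w j = 1" using wadd[of "q - j" j] that wq[of 1] wpow[of 1 q] by simp
    then show ?thesis using w0[of j] by (simp add: field_simps)
  qed
  have ndvd: "\<not> q dvd j * p" if "j \<in> {1..q-1}" for j
  proof
    assume "q dvd j * p"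
    then have "q dvd j" using assms(3) by (metis coprime_commute coprime_dvd_mult_left_iff)
    then show False using that by (auto dest: dvd_imp_le)
  qed
  have S_eq: "(\<Sum>j=1..q-1. let \<xi> = exp (2 * pi * \<i> * of_nat j / of_nat q) in
            \<xi> / ((\<xi> - 1)^2 * (\<xi>^p - 1))) = (\<Sum>j=1..q-1. T (w j))"
    by (simp add: T_def w_def Let_def)
  have refl: "(\<Sum>j=1..q-1. T (w j)) = (\<Sum>j=1..q-1. T (w (q - j)))"
    by (rule sum.reindex_bij_witness[where i="\<lambda>j. q - j" and j="\<lambda>j. q - j"]) auto
  have pairs: "T (w j) + T (w (q - j)) = - D (w j)" if "j \<in> {1..q-1}" for j
  proof -
    have "w j \<noteq> 1" using w1 that by (auto dest: dvd_imp_le)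
    moreover have "w j ^ p \<noteq> 1" using w1 wpow ndvd[OF that] by simp
    moreover have "w (q - j) = inverse (w j)" using that by (intro winv) auto
    ultimately show ?thesis using pair_id[of "w j" p] w0[of j]
      by (simp add: T_def D_def)
  qed
  have two: "2 * (\<Sum>j=1..q-1. T (w j)) = - (\<Sum>j=1..q-1. D (w j))"
  proof -
    have "2 * (\<Sum>j=1..q-1. T (w j)) = (\<Sum>j=1..q-1. T (w j)) + (\<Sum>j=1..q-1. T (w (q - j)))"
      using refl by simp
    also have "\<dots> = (\<Sum>j=1..q-1. - D (w j))"
      by (simp add: sum.distrib[symmetric] pairs)
    finally show ?thesis by (simp add: sum_negf)
  qed
  have Dexp: "D (w j) = (\<Sum>k<q. of_nat k * (of_nat q - of_nat k) * w j ^ k) / (2 * of_nat q)"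
    if "j \<in> {1..q-1}" for j
  proof -
    have "w j \<noteq> 1" using w1 that by (auto dest: dvd_imp_le)
    then show ?thesis using C_id[OF wq] qnz by (simp add: D_def)
  qed
  have inner: "(\<Sum>j=1..q-1. w j ^ k) = -1" if "0 < k" "k < q" for k
  proof -
    have wk: "w k \<noteq> 1" using w1 that by (auto dest: dvd_imp_le)
    have g: "(\<Sum>j<q. w k ^ j) = 0" using geo_id[of "w k" q] wk wq[of k] by simp
    have "{..<q} = insert 0 {1..q-1}" using assms by auto
    then have "(\<Sum>j<q. w k ^ j) = 1 + (\<Sum>j=1..q-1. w k ^ j)" by simp
    moreover have "(\<Sum>j=1..q-1. w j ^ k) = (\<Sum>j=1..q-1. w k ^ j)"
      by (simp add: wpow mult.commute)
    ultimately show ?thesis using g by (simp add: eq_neg_iff_add_eq_0 add.commute)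
  qed
  have sumD: "(\<Sum>j=1..q-1. D (w j)) =
      (\<Sum>k<q. of_nat k * (of_nat q - of_nat k) * (\<Sum>j=1..q-1. w j ^ k)) / (2 * of_nat q)"
  proof -
    have "(\<Sum>j=1..q-1. D (w j)) = (\<Sum>j=1..q-1. (\<Sum>k<q. of_nat k * (of_nat q - of_nat k) * w j ^ k) / (2 * of_nat q))"
      by (rule sum.cong) (simp_all add: Dexp)
    also have "\<dots> = (\<Sum>j=1..q-1. \<Sum>k<q. of_nat k * (of_nat q - of_nat k) * w j ^ k) / (2 * of_nat q)"
      by (simp only: sum_divide_distrib)
    also have "\<dots> = (\<Sum>k<q. \<Sum>j=1..q-1. of_nat k * (of_nat q - of_nat k) * w j ^ k) / (2 * of_nat q)"
      by (simp only: sum.swap[of _ "{1..q-1}"])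
    also have "\<dots> = (\<Sum>k<q. of_nat k * (of_nat q - of_nat k) * (\<Sum>j=1..q-1. w j ^ k)) / (2 * of_nat q)"
      by (simp only: sum_distrib_left)
    finally show ?thesis .
  qed
  have sumD2: "(\<Sum>k<q. of_nat k * (of_nat q - of_nat k) * (\<Sum>j=1..q-1. w j ^ k))
      = - (\<Sum>k<q. of_nat k * (of_nat q - of_nat k) :: complex)"
    unfolding sum_negf[symmetric]
  proof (rule sum.cong)
    fix k assume "k \<in> {..<q}"
    then show "of_nat k * (of_nat q - of_nat k) * (\<Sum>j=1..q-1. w j ^ k) = - (of_nat k * (of_nat q - of_nat k))"
      using inner[of k] by (cases "k = 0") auto
  qed simp
  define K where "K = (\<Sum>k<q. of_nat k * (of_nat q - of_nat k) :: complex)"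
  define S where "S = (\<Sum>j=1..q-1. T (w j))"
  have e1: "2 * S = K / (2 * of_nat q)"
  proof -
    have "2 * S = - (\<Sum>j=1..q-1. D (w j))" unfolding S_def by (rule two)
    also have "\<dots> = - ((- K) / (2 * of_nat q))" unfolding sumD sumD2 K_def ..
    finally show ?thesis by simp
  qed
  have e2: "K = of_nat q * (of_nat q ^ 2 - 1) / 6"
  proof -
    have "K = of_nat q * of_nat q * (of_nat q - 1) / 2 - of_nat q * (of_nat q - 1) * (2 * of_nat q - 1) / 6"
      unfolding K_def by (rule sumk)
    then show ?thesis by (simp add: field_simps power2_eq_square)
  qed
  have "of_nat q * (1 + S * 24) = of_nat q * (of_nat q ^ 2)" using e1 unfolding e2 using qnz
    by (simp add: field_simps)
  then have "1 + S * 24 = of_nat q ^ 2" using qnz by simp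
  then have "S = (of_nat q ^ 2 - 1) / 24" by (simp add: field_simps)
  then show ?thesis unfolding S_eq S_def .
qed

end
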